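(* Let $N,\mu,\beta,\sigma,\gamma,p>0$ and $0<\rho<1$ and consider $$\begin{aligned}S'&=\mu N-\tfrac{\beta}{N}S(1-\rho)I-\tfrac{p}{N}S-\mu S, & E'&=\tfrac{\beta}{N}S(1-\rho)I-(\sigma+\mu) E, & I'&=\sigma E-(\gamma+\mu) I,\\ R'&=\gamma I-\mu R, & V'&=\tfrac{p}{N}S-\mu V,\end{aligned}$$ on the invariant region $\Sigma=\{(S,E,I,R,V)\in\mathbb{R}_+^5: S+E+I+R+V=N\}$. Let $\mathcal{R}_0=\dfrac{\mu N\sigma\beta(1-\rho)}{(\sigma+\mu)(\gamma+\mu)(p+\mu N)}$. If $\mathcal{R}_0<1$, then the disease-free equilibrium $P^*=\left(\frac{\mu N^2}{p+\mu N},0,0,0,\frac{pN}{p+\mu N}\right)$ is globally asymptotically stable in $\Sigma$.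
   Context: SEIR model with vaccination at constant effective rate $p$ and equal birth/death rate $\mu$. Global asymptotic stability in $\Sigma$ means $P^*$ is stable and every solution starting in $\Sigma$ converges to $P^*$ as $t\to+\infty$. *)

theory Defs
  imports "HOL-Analysis.Analysis"
begin

type_synonym state = "real \<times> real \<times> real \<times> real \<times> real"

definition seir_field ::
  "real \<Rightarrow> real \<Rightarrow> real \<Rightarrow> real \<Rightarrow> real \<Rightarrow> real \<Rightarrow> real \<Rightarrow> state \<Rightarrow> state" where
  "seir_field N \<mu> \<beta> \<sigma> \<gamma> p \<rho> = (\<lambda>(S, E, I, R, V).
     (\<mu> * N - \<beta> / N * S * (1 - \<rho>) * I - p / N * S - \<mu> * S,
      \<beta> / N * S * (1 - \<rho>) * I - (\<sigma> + \<mu>) * E,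
      \<sigma> * E - (\<gamma> + \<mu>) * I,
      \<gamma> * I - \<mu> * R,
      p / N * S - \<mu> * V))"

definition Sigma_region :: "real \<Rightarrow> state set" where
  "Sigma_region N = {(S, E, I, R, V). S \<ge> 0 \<and> E \<ge> 0 \<and> I \<ge> 0 \<and> R \<ge> 0 \<and> V \<ge> 0
                       \<and> S + E + I + R + V = N}"

definition is_solution :: "(state \<Rightarrow> state) \<Rightarrow> (real \<Rightarrow> state) \<Rightarrow> bool" where
  "is_solution f x \<longleftrightarrow>
     (\<forall>t\<ge>0. (x has_vector_derivative f (x t)) (at t within {0..}))"

definition globally_asymptotically_stable_in ::
  "(state \<Rightarrow> state) \<Rightarrow> state \<Rightarrow> state set \<Rightarrow> bool" where
  "globally_asymptotically_stable_in f P D \<longleftrightarrow>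
     (\<forall>\<epsilon>>0. \<exists>\<delta>>0. \<forall>x. is_solution f x \<and> x 0 \<in> D \<and> dist (x 0) P < \<delta>
            \<longrightarrow> (\<forall>t\<ge>0. dist (x t) P < \<epsilon>))
   \<and> (\<forall>x. is_solution f x \<and> x 0 \<in> D \<longrightarrow> (x \<longlongrightarrow> P) at_top)"

end

theory Submission
  imports Defs "HOL-Real_Asymp.Real_Asymp"
begin


lemma deriv_cont:
  fixes f :: "real \<Rightarrow> real"
  assumes "\<And>t. t \<in> A \<Longrightarrow> (f has_real_derivative f' t) (at t within {0..})" "A \<subseteq> {0..}"
  shows "continuous_on A f"
  unfolding continuous_on_eq_continuous_within
proof
  fix x assume x: "x \<in> A"
  have "continuous (at x within {0..}) f"
    using assms(1)[OF x] by (simp add: has_real_derivative_iff_has_vector_derivative has_vector_derivative_continuous)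
  then show "continuous (at x within A) f" using assms(2) continuous_within_subset by blast
qed

lemma deriv_at:
  fixes f :: "real \<Rightarrow> real"
  assumes "t > 0" "(f has_real_derivative D) (at t within {0..})"
  shows "DERIV f t :> D"
proof -
  have "(f has_real_derivative D) (at t within {0<..})"
    using assms(2) by (rule has_field_derivative_subset) auto
  then show ?thesis using assms(1) at_within_open[of t "{0<..}"] by simp
qed

lemma lin_decay:
  fixes z z' :: "real \<Rightarrow> real" and k M t0 :: real
  assumes k: "k > 0" and M: "M \<ge> 0" and t0: "t0 \<ge> 0"
  and d: "\<And>t. t \<ge> t0 \<Longrightarrow> (z has_real_derivative z' t) (at t within {0..})"
  and b: "\<And>t. t \<ge> t0 \<Longrightarrow> z' t \<le> - k * z t + M"
  and t: "t \<ge> t0"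
  shows "z t \<le> M / k + \<bar>z t0\<bar> * exp (- k * (t - t0))"
proof -
  define u where "u = (\<lambda>s. (z s - M / k) * exp (k * s))"
  have du: "(u has_real_derivative (z' s * exp (k * s) + (z s - M / k) * (exp (k * s) * k))) (at s within {0..})"
    if "s \<ge> t0" for s
    unfolding u_def
    by (auto intro!: derivative_eq_intros d that)
  have "u t \<le> u t0"
  proof (rule DERIV_nonpos_imp_decreasing_open[OF t])
    fix x assume x: "t0 < x" "x < t"
    have "z' x * exp (k * x) + (z x - M / k) * (exp (k * x) * k) = (z' x + k * z x - M) * exp (k * x)"
      using k by (simp add: field_simps)
    also have "\<dots> \<le> 0" using b[of x] x by (intro mult_nonpos_nonneg) auto
    finally show "\<exists>y. DERIV u x :> y \<and> y \<le> 0"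
      using deriv_at[OF _ du[of x]] x t0 by force
  next
    show "continuous_on {t0..t} u"
      by (rule deriv_cont[where f'="\<lambda>s. z' s * exp (k * s) + (z s - M / k) * (exp (k * s) * k)"])
         (use du t0 in auto)
  qed
  then have "(z t - M / k) * exp (k * t) \<le> (z t0 - M / k) * exp (k * t0)" by (simp add: u_def)
  then have "(z t - M / k) \<le> (z t0 - M / k) * exp (k * t0) / exp (k * t)"
    by (simp add: pos_le_divide_eq)
  also have "(z t0 - M / k) * exp (k * t0) / exp (k * t) = (z t0 - M / k) * (exp (k * t0) / exp (k * t))" by simp
  also have "exp (k * t0) / exp (k * t) = exp (- k * (t - t0))"
    by (simp add: exp_diff[symmetric] algebra_simps)
  finally have "z t - M / k \<le> (z t0 - M / k) * exp (- k * (t - t0))" by simp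
  also have "\<dots> \<le> \<bar>z t0\<bar> * exp (- k * (t - t0))"
    using M k by (intro mult_right_mono) (auto simp: abs_if, smt (verit) divide_nonneg_pos)
  finally show ?thesis by simp
qed

lemma pos_right:
  fixes f :: "real \<Rightarrow> real"
  assumes "(f has_real_derivative l) (at x within {0..})" "l > 0" "x \<ge> 0"
  shows "eventually (\<lambda>s. f s > f x) (at_right x)"
proof -
  obtain d where d: "d > 0" "\<forall>h>0. x + h \<in> {0..} \<longrightarrow> h < d \<longrightarrow> f x < f (x + h)"
    using has_real_derivative_pos_inc_right[OF assms(1,2)] by blast
  show ?thesis unfolding eventually_at_right_field
  proof (intro exI[of _ "x + d"] conjI allI impI)
    show "x < x + d" using d by simp
    fix y assume y: "x < y" "y < x + d"
    show "f x < f y" using assms(3) d(2)[rule_format, of "y - x"] y by auto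
  qed
qed

lemma cont_right:
  fixes f :: "real \<Rightarrow> real"
  assumes "continuous (at x within {0..}) f" "f x > 0" "x \<ge> 0"
  shows "eventually (\<lambda>s. f s > 0) (at_right x)"
proof -
  have "eventually (\<lambda>s. f s > 0) (at x within {0..})"
    using assms(1,2) unfolding continuous_within by (rule order_tendstoD(1))
  moreover have "at_right x \<le> at x within {0..}"
    by (rule at_le) (use assms(3) in auto)
  ultimately show ?thesis using filter_leD by blast
qed

lemma barrier2:
  fixes f g f' g' :: "real \<Rightarrow> real" and T :: real
  assumes T: "0 \<le> T"
  and df: "\<And>t. 0 \<le> t \<Longrightarrow> t \<le> T \<Longrightarrow> (f has_real_derivative f' t) (at t within {0..})"
  and dg: "\<And>t. 0 \<le> t \<Longrightarrow> t \<le> T \<Longrightarrow> (g has_real_derivative g' t) (at t within {0..})"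
  and f0: "f 0 \<ge> 0" and g0: "g 0 \<ge> 0"
  and bf: "\<And>t. 0 \<le> t \<Longrightarrow> t \<le> T \<Longrightarrow> f t = 0 \<Longrightarrow> g t \<ge> 0 \<Longrightarrow> f' t > 0"
  and bg: "\<And>t. 0 \<le> t \<Longrightarrow> t \<le> T \<Longrightarrow> g t = 0 \<Longrightarrow> f t \<ge> 0 \<Longrightarrow> g' t > 0"
  shows "\<forall>t\<in>{0..T}. f t \<ge> 0 \<and> g t \<ge> 0"
proof -
  define C where "C = {t \<in> {0..T}. 0 \<le> min (f t) (g t)}"
  have cf: "continuous_on {0..T} f" by (rule deriv_cont[where f'=f']) (use df in auto)
  have cg: "continuous_on {0..T} g" by (rule deriv_cont[where f'=g']) (use dg in auto)
  have closedC: "closed C" unfolding C_def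
    by (rule continuous_on_closed_Collect_le) (auto intro!: continuous_intros cf cg)
  define A where "A = {t \<in> {0..T}. {0..t} \<subseteq> C}"
  have 0: "0 \<in> A" using T f0 g0 by (auto simp: A_def C_def)
  have bdd: "bdd_above A" unfolding A_def by (rule bdd_aboveI[of _ T]) auto
  define t1 where "t1 = Sup A"
  have t1T: "t1 \<le> T" unfolding t1_def using 0 by (intro cSup_least) (auto simp: A_def)
  have t10: "0 \<le> t1" unfolding t1_def using 0 bdd by (simp add: cSup_upper)
  have sub1: "{0..<t1} \<subseteq> C"
  proof
    fix u assume u: "u \<in> {0..<t1}"
    then obtain a where "a \<in> A" "u < a" using less_cSup_iff[OF _ bdd] 0 unfolding t1_def by force
    then show "u \<in> C" using u by (auto simp: A_def)
  qed
  have sub2: "{0..t1} \<subseteq> C"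
  proof (cases "t1 = 0")
    case True then show ?thesis using 0 by (auto simp: A_def)
  next
    case False
    then have "closure {0..<t1} = {0..t1}" using t10 by simp
    then show ?thesis using closure_minimal[OF sub1 closedC] by simp
  qed
  show ?thesis
  proof (cases "t1 = T")
    case True then show ?thesis using sub2 by (auto simp: C_def)
  next
    case False
    then have lt: "t1 < T" using t1T by simp
    have ft1: "f t1 \<ge> 0" and gt1: "g t1 \<ge> 0" using sub2 t10 by (auto simp: C_def)
    have evf: "eventually (\<lambda>s. f s \<ge> 0) (at_right t1)"
    proof (cases "f t1 = 0")
      case True
      have "eventually (\<lambda>s. f s > f t1) (at_right t1)"
        by (rule pos_right[OF df bf]) (use t10 lt True gt1 in auto)
      then show ?thesis using True by (auto elim: eventually_mono)
    next
      case False
      have "continuous (at t1 within {0..}) f"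
        using df[of t1] t10 lt by (simp add: has_real_derivative_iff_has_vector_derivative has_vector_derivative_continuous)
      from cont_right[OF this] False ft1 t10 show ?thesis by (auto elim: eventually_mono)
    qed
    have evg: "eventually (\<lambda>s. g s \<ge> 0) (at_right t1)"
    proof (cases "g t1 = 0")
      case True
      have "eventually (\<lambda>s. g s > g t1) (at_right t1)"
        by (rule pos_right[OF dg bg]) (use t10 lt True ft1 in auto)
      then show ?thesis using True by (auto elim: eventually_mono)
    next
      case False
      have "continuous (at t1 within {0..}) g"
        using dg[of t1] t10 lt by (simp add: has_real_derivative_iff_has_vector_derivative has_vector_derivative_continuous)
      from cont_right[OF this] False gt1 t10 show ?thesis by (auto elim: eventually_mono)
    qed
    from eventually_conj[OF evf evg] obtain b where b: "b > t1" "\<forall>y>t1. y < b \<longrightarrow> f y \<ge> 0 \<and> g y \<ge> 0"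
      unfolding eventually_at_right_field by blast
    define s where "s = min ((t1 + b) / 2) T"
    have s: "t1 < s" "s < b" "s \<le> T" using b lt by (auto simp: s_def min_def)
    have "s \<in> A" unfolding A_def
    proof (intro CollectI conjI subsetI)
      show "s \<in> {0..T}" using s t10 by auto
      fix u assume u: "u \<in> {0..s}"
      show "u \<in> C"
      proof (cases "u \<le> t1")
        case True then show ?thesis using sub2 u by auto
      next
        case False then show ?thesis using b(2)[rule_format, of u] u s by (auto simp: C_def)
      qed
    qed
    then have "s \<le> t1" unfolding t1_def using bdd by (rule cSup_upper)
    then show ?thesis using s by simp
  qed
qed

lemma lin_decay2:
  fixes z z' w :: "real \<Rightarrow> real" and k M t0 :: real
  assumes k: "k > 0" and t0: "t0 \<ge> 0"
  and d: "\<And>t. t \<ge> t0 \<Longrightarrow> (z has_real_derivative (- k * z t + w t)) (at t within {0..})"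
  and b: "\<And>t. t \<ge> t0 \<Longrightarrow> \<bar>w t\<bar> \<le> M"
  and t: "t \<ge> t0"
  shows "\<bar>z t\<bar> \<le> M / k + \<bar>z t0\<bar> * exp (- k * (t - t0))"
proof -
  have M: "M \<ge> 0" using b[of t0] by simp
  have 1: "z t \<le> M / k + \<bar>z t0\<bar> * exp (- k * (t - t0))"
  proof (rule lin_decay[OF k M t0 d _ t])
    fix s assume "t0 \<le> s" then show "- k * z s + w s \<le> - k * z s + M" using b[of s] by (simp add: abs_le_iff)
  qed
  have 2: "(\<lambda>s. - z s) t \<le> M / k + \<bar>(\<lambda>s. - z s) t0\<bar> * exp (- k * (t - t0))"
  proof (rule lin_decay[OF k M t0 _ _ t])
    fix s assume s: "s \<ge> t0"
    show "((\<lambda>s. - z s) has_real_derivative - (- k * z s + w s)) (at s within {0..})"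
      using d[OF s] by (rule DERIV_minus)
    show "- (- k * z s + w s) \<le> - k * - z s + M" using b[OF s] by simp
  qed
  show ?thesis using 1 2 by simp
qed

lemma lin_conv:
  fixes z w :: "real \<Rightarrow> real" and k :: real
  assumes k: "k > 0"
  and d: "\<And>t. t \<ge> 0 \<Longrightarrow> (z has_real_derivative (- k * z t + w t)) (at t within {0..})"
  and w: "(w \<longlongrightarrow> 0) at_top"
  shows "(z \<longlongrightarrow> 0) at_top"
  unfolding tendsto_iff
proof (intro allI impI)
  fix \<eta> :: real assume \<eta>: "\<eta> > 0"
  have "eventually (\<lambda>t. dist (w t) 0 < k * \<eta> / 2) at_top"
    using w k \<eta> unfolding tendsto_iff by (metis half_gt_zero mult_pos_pos)
  then obtain t1 where t1: "\<And>t. t \<ge> t1 \<Longrightarrow> \<bar>w t\<bar> < k * \<eta> / 2"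
    unfolding eventually_at_top_linorder by auto
  define t2 where "t2 = max t1 0"
  have lim: "((\<lambda>t. \<bar>z t2\<bar> * exp (- k * (t - t2))) \<longlongrightarrow> 0) at_top"
    using k by real_asymp
  have "eventually (\<lambda>t. \<bar>z t2\<bar> * exp (- k * (t - t2)) < \<eta> / 2) at_top"
    using order_tendstoD(2)[OF lim, of "\<eta> / 2"] \<eta> by simp
  moreover have "eventually (\<lambda>t. t \<ge> t2) at_top" by simp
  ultimately show "eventually (\<lambda>t. dist (z t) 0 < \<eta>) at_top"
  proof eventually_elim
    case (elim t)
    have "\<bar>z t\<bar> \<le> (k * \<eta> / 2) / k + \<bar>z t2\<bar> * exp (- k * (t - t2))"
      by (rule lin_decay2[OF k _ d]) (use elim t1 in \<open>auto simp: t2_def less_imp_le\<close>)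
    then show ?case using elim k by simp
  qed
qed



lemma hvd_fst: "(f has_vector_derivative v) F \<Longrightarrow> ((\<lambda>t. fst (f t)) has_vector_derivative fst v) F"
  unfolding has_vector_derivative_def by (drule has_derivative_fst) simp
lemma hvd_snd: "(f has_vector_derivative v) F \<Longrightarrow> ((\<lambda>t. snd (f t)) has_vector_derivative snd v) F"
  unfolding has_vector_derivative_def by (drule has_derivative_snd) simp

lemma h1: "(a::real) \<noteq> 0 \<Longrightarrow> n \<noteq> 0 \<Longrightarrow> (a / n) * (m * n^2 / a) = m * n"
  by (simp add: field_simps power2_eq_square)
lemma h2: "(n::real) \<noteq> 0 \<Longrightarrow> (x / n) * (m * n^2 / a) * s = m * n * s * x / a"
  by (simp add: field_simps power2_eq_square)
lemma h3: "(n::real) \<noteq> 0 \<Longrightarrow> q / n * (m * n^2 / a) = m * (q * n / a)"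
  by (simp add: field_simps power2_eq_square)

lemma mid: "u < v \<Longrightarrow> u < (u + v) / 2 \<and> (u + v) / 2 < (v::real)" by auto

lemma dist_Pair_le: "dist (a, b) (c, d) \<le> dist a c + dist b d"
  unfolding dist_Pair_Pair by (rule sqrt_sum_squares_le_sum) auto

locale seir_params =
  fixes N \<mu> \<beta> \<sigma> \<gamma> p \<rho> :: real
  assumes N: "N > 0" and mu: "\<mu> > 0" and beta: "\<beta> > 0" and sig: "\<sigma> > 0" and gam: "\<gamma> > 0"
    and pp: "p > 0" and rho0: "0 < \<rho>" and rho1: "\<rho> < 1"
    and R0: "\<mu> * N * \<sigma> * \<beta> * (1 - \<rho>) / ((\<sigma> + \<mu>) * (\<gamma> + \<mu>) * (p + \<mu> * N)) < 1"
begin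

definition "k = p / N + \<mu>"
definition "c = \<beta> * (1 - \<rho>) / N"
definition "Sst = \<mu> * N^2 / (p + \<mu> * N)"
definition "Vst = p * N / (p + \<mu> * N)"
definition "S1 = (Sst + (\<sigma> + \<mu>) * (\<gamma> + \<mu>) / (c * \<sigma>)) / 2"

lemma pmN: "p + \<mu> * N > 0" using N mu pp by (simp add: add_pos_pos)
definition "DSc r = c * S1 * (1 + r) / (r * k) + 1"
definition "Cc r = DSc r * (1 + p / (N * \<mu>)) + (1 + r) + (1 + r) / r * (1 + \<gamma> / \<mu>) + 2"

lemma k_pos: "k > 0" using N mu pp by (simp add: k_def add_pos_pos)
lemma c_pos: "c > 0" using N beta rho1 by (simp add: c_def)
lemma Sst_pos: "Sst > 0" unfolding Sst_def using N mu pmN by (intro divide_pos_pos) auto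
lemma Sst_lt: "Sst < N"
proof -
  have "\<mu> * N^2 < N * (p + \<mu> * N)" using N pp by (simp add: power2_eq_square algebra_simps)
  then show ?thesis using N mu pmN by (simp add: Sst_def divide_less_eq)
qed
lemma k_eq: "k = (p + \<mu> * N) / N" using N by (simp add: k_def field_simps)
lemma k_Sst: "k * Sst = \<mu> * N"
  unfolding k_eq Sst_def using h1[of "p + \<mu> * N" N \<mu>] pmN N by simp
lemma Vst_eq: "\<mu> * Vst = p / N * Sst"
  unfolding Vst_def Sst_def using h3[of N p \<mu> "p + \<mu> * N"] N by simp
lemma cSst: "c * Sst * \<sigma> < (\<sigma> + \<mu>) * (\<gamma> + \<mu>)"
proof -
  have pos: "(\<sigma> + \<mu>) * (\<gamma> + \<mu>) * (p + \<mu> * N) > 0" using sig gam mu pmN by simp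
  have "\<mu> * N * \<sigma> * \<beta> * (1 - \<rho>) < (\<sigma> + \<mu>) * (\<gamma> + \<mu>) * (p + \<mu> * N)"
    using R0 pos by (simp add: divide_less_eq)
  moreover have "c * Sst * \<sigma> = \<mu> * N * \<sigma> * \<beta> * (1 - \<rho>) / (p + \<mu> * N)"
    unfolding c_def Sst_def using h2[of N "\<beta> * (1 - \<rho>)" \<mu> "p + \<mu> * N" \<sigma>] N by (simp add: ac_simps)
  ultimately show ?thesis using pmN by (simp add: divide_less_eq)
qed
lemma S1_gt: "Sst < S1" and cS1: "c * S1 * \<sigma> < (\<sigma> + \<mu>) * (\<gamma> + \<mu>)"
proof -
  have cs: "c * \<sigma> > 0" using c_pos sig by simp
  have SS: "Sst < (\<sigma> + \<mu>) * (\<gamma> + \<mu>) / (c * \<sigma>)"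
    using cSst cs by (simp add: pos_less_divide_eq mult.commute mult.left_commute)
  then show "Sst < S1" using mid[OF SS] unfolding S1_def by auto
  have "S1 < (\<sigma> + \<mu>) * (\<gamma> + \<mu>) / (c * \<sigma>)"
    using mid[OF SS] unfolding S1_def by auto
  then show "c * S1 * \<sigma> < (\<sigma> + \<mu>) * (\<gamma> + \<mu>)"
    using cs by (simp add: pos_less_divide_eq mult.commute mult.left_commute)
qed

lemma lyap_consts: obtains r \<kappa> where "r > 0" "\<kappa> > 0" "r * \<sigma> - (\<sigma> + \<mu>) \<le> - \<kappa>"
  "c * S1 - r * (\<gamma> + \<mu>) \<le> - \<kappa> * r"
proof -
  have gm: "\<gamma> + \<mu> > 0" using gam mu by simp
  have a: "c * S1 / (\<gamma> + \<mu>) < (\<sigma> + \<mu>) / \<sigma>"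
    using cS1 gm sig by (simp add: divide_less_eq less_divide_eq mult.commute mult.left_commute)
  have S1p: "S1 > 0" using S1_gt Sst_pos by simp
  define r where "r = (c * S1 / (\<gamma> + \<mu>) + (\<sigma> + \<mu>) / \<sigma>) / 2"
  have r1: "c * S1 / (\<gamma> + \<mu>) < r" and r2: "r < (\<sigma> + \<mu>) / \<sigma>" using mid[OF a] unfolding r_def by auto
  have rp: "r > 0" using r1 c_pos S1p gm by (smt (verit) divide_pos_pos mult_pos_pos)
  define \<kappa> where "\<kappa> = min ((\<sigma> + \<mu>) - r * \<sigma>) ((\<gamma> + \<mu>) - c * S1 / r)"
  have e1: "r * \<sigma> < \<sigma> + \<mu>" using r2 sig by (simp add: less_divide_eq)
  have e2: "c * S1 < r * (\<gamma> + \<mu>)" using r1 gm by (simp add: divide_less_eq mult.commute)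
  have e2': "c * S1 / r < \<gamma> + \<mu>" using e2 rp by (simp add: divide_less_eq mult.commute)
  show ?thesis
  proof (rule that[OF rp])
    show "\<kappa> > 0" using e1 e2' by (simp add: \<kappa>_def)
    show "r * \<sigma> - (\<sigma> + \<mu>) \<le> - \<kappa>" by (simp add: \<kappa>_def)
    have "\<kappa> * r \<le> ((\<gamma> + \<mu>) - c * S1 / r) * r" using rp by (intro mult_right_mono) (auto simp: \<kappa>_def)
    also have "\<dots> = r * (\<gamma> + \<mu>) - c * S1" using rp by (simp add: field_simps)
    finally show "c * S1 - r * (\<gamma> + \<mu>) \<le> - \<kappa> * r" by simp
  qed
qed

end

locale seir_sol = seir_params +
  fixes x :: "real \<Rightarrow> state"
  assumes sol: "is_solution (seir_field N \<mu> \<beta> \<sigma> \<gamma> p \<rho>) x"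
    and init: "x 0 \<in> Sigma_region N"
begin

definition "S = (\<lambda>t. fst (x t))"
definition "E = (\<lambda>t. fst (snd (x t)))"
definition "I = (\<lambda>t. fst (snd (snd (x t))))"
definition "R = (\<lambda>t. fst (snd (snd (snd (x t)))))"
definition "V = (\<lambda>t. snd (snd (snd (snd (x t)))))"

lemma x_eq: "x t = (S t, E t, I t, R t, V t)"
  by (simp add: S_def E_def I_def R_def V_def)

lemma init': "S 0 \<ge> 0" "E 0 \<ge> 0" "I 0 \<ge> 0" "R 0 \<ge> 0" "V 0 \<ge> 0"
  "S 0 + E 0 + I 0 + R 0 + V 0 = N"
  using init unfolding Sigma_region_def by (auto simp: x_eq[of 0])

lemma derivs:
  assumes t: "t \<ge> 0"
  shows dS: "(S has_real_derivative (\<mu> * N - c * S t * I t - k * S t)) (at t within {0..})"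
    and dE: "(E has_real_derivative (c * S t * I t - (\<sigma> + \<mu>) * E t)) (at t within {0..})"
    and dI: "(I has_real_derivative (\<sigma> * E t - (\<gamma> + \<mu>) * I t)) (at t within {0..})"
    and dR: "(R has_real_derivative (\<gamma> * I t - \<mu> * R t)) (at t within {0..})"
    and dV: "(V has_real_derivative (p / N * S t - \<mu> * V t)) (at t within {0..})"
proof -
  have h: "(x has_vector_derivative seir_field N \<mu> \<beta> \<sigma> \<gamma> p \<rho> (x t)) (at t within {0..})"
    using sol t unfolding is_solution_def by blast
  have v: "seir_field N \<mu> \<beta> \<sigma> \<gamma> p \<rho> (x t) =
     (\<mu> * N - c * S t * I t - k * S t, c * S t * I t - (\<sigma> + \<mu>) * E t, \<sigma> * E t - (\<gamma> + \<mu>) * I t,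
      \<gamma> * I t - \<mu> * R t, p / N * S t - \<mu> * V t)"
  proof -
    have "seir_field N \<mu> \<beta> \<sigma> \<gamma> p \<rho> (x t) = (\<mu> * N - \<beta> / N * S t * (1 - \<rho>) * I t - p / N * S t - \<mu> * S t,
      \<beta> / N * S t * (1 - \<rho>) * I t - (\<sigma> + \<mu>) * E t,
      \<sigma> * E t - (\<gamma> + \<mu>) * I t,
      \<gamma> * I t - \<mu> * R t,
      p / N * S t - \<mu> * V t)"
      by (simp only: x_eq seir_field_def prod.case)
    moreover have "\<beta> / N * S t * (1 - \<rho>) * I t = c * S t * I t" by (simp add: c_def)
    moreover have "\<mu> * N - c * S t * I t - p / N * S t - \<mu> * S t = \<mu> * N - c * S t * I t - k * S t"
      by (simp add: k_def algebra_simps)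
    ultimately show ?thesis by simp
  qed
  note h' = h[unfolded v]
  show "(S has_real_derivative (\<mu> * N - c * S t * I t - k * S t)) (at t within {0..})"
    using hvd_fst[OF h'] unfolding has_real_derivative_iff_has_vector_derivative S_def by simp
  show "(E has_real_derivative (c * S t * I t - (\<sigma> + \<mu>) * E t)) (at t within {0..})"
    using hvd_fst[OF hvd_snd[OF h']] unfolding has_real_derivative_iff_has_vector_derivative E_def by simp
  show "(I has_real_derivative (\<sigma> * E t - (\<gamma> + \<mu>) * I t)) (at t within {0..})"
    using hvd_fst[OF hvd_snd[OF hvd_snd[OF h']]] unfolding has_real_derivative_iff_has_vector_derivative I_def by simp
  show "(R has_real_derivative (\<gamma> * I t - \<mu> * R t)) (at t within {0..})"
    using hvd_fst[OF hvd_snd[OF hvd_snd[OF hvd_snd[OF h']]]] unfolding has_real_derivative_iff_has_vector_derivative R_def by simp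
  show "(V has_real_derivative (p / N * S t - \<mu> * V t)) (at t within {0..})"
    using hvd_snd[OF hvd_snd[OF hvd_snd[OF hvd_snd[OF h']]]] unfolding has_real_derivative_iff_has_vector_derivative V_def by simp
qed

lemma S_nonneg: "t \<ge> 0 \<Longrightarrow> S t \<ge> 0"
  using barrier2[of t S "\<lambda>t. \<mu> * N - c * S t * I t - k * S t" S "\<lambda>t. \<mu> * N - c * S t * I t - k * S t"]
    dS init'(1) N mu by auto

lemma EI_nonneg:
  assumes t: "t \<ge> 0"
  shows "E t \<ge> 0 \<and> I t \<ge> 0"
proof -
  have "continuous_on {0..t} S" by (rule deriv_cont[OF dS]) auto
  then obtain B where B: "B \<ge> 0" "\<And>s. s \<in> {0..t} \<Longrightarrow> \<bar>S s\<bar> \<le> B"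
    using continuous_on_compact_bound[of "{0..t}" S] by auto
  define K where "K = c * B + \<sigma> + 1"
  have main: "E t + \<epsilon> * exp (K * t) \<ge> 0 \<and> I t + \<epsilon> * exp (K * t) \<ge> 0" if \<epsilon>: "\<epsilon> > 0" for \<epsilon>
  proof -
    define f where "f = (\<lambda>s. E s + \<epsilon> * exp (K * s))"
    define g where "g = (\<lambda>s. I s + \<epsilon> * exp (K * s))"
    define f' where "f' = (\<lambda>s. c * S s * I s - (\<sigma> + \<mu>) * E s + \<epsilon> * (exp (K * s) * K))"
    define g' where "g' = (\<lambda>s. \<sigma> * E s - (\<gamma> + \<mu>) * I s + \<epsilon> * (exp (K * s) * K))"
    have df: "(f has_real_derivative f' s) (at s within {0..})" if "0 \<le> s" for s
    proof -
      have e: "((\<lambda>s. \<epsilon> * exp (K * s)) has_real_derivative \<epsilon> * (exp (K * s) * K)) (at s within {0..})"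
        by (auto intro!: derivative_eq_intros)
      from DERIV_add[OF dE[OF that] e] show ?thesis by (simp add: f_def f'_def)
    qed
    have dg: "(g has_real_derivative g' s) (at s within {0..})" if "0 \<le> s" for s
    proof -
      have e: "((\<lambda>s. \<epsilon> * exp (K * s)) has_real_derivative \<epsilon> * (exp (K * s) * K)) (at s within {0..})"
        by (auto intro!: derivative_eq_intros)
      from DERIV_add[OF dI[OF that] e] show ?thesis by (simp add: g_def g'_def)
    qed
    have "\<forall>s\<in>{0..t}. f s \<ge> 0 \<and> g s \<ge> 0"
    proof (rule barrier2[OF t df dg])
      show "0 \<le> f 0" "0 \<le> g 0" using init' \<epsilon> by (auto simp: f_def g_def)
    next
      fix s assume s: "0 \<le> s" "s \<le> t" "f s = 0" "0 \<le> g s"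
      define e where "e = \<epsilon> * exp (K * s)"
      have e: "e > 0" using \<epsilon> by (simp add: e_def)
      have Es: "E s = - e" using s(3) by (simp add: f_def e_def)
      have Is: "I s \<ge> - e" using s(4) by (simp add: g_def e_def)
      have S0: "S s \<ge> 0" using S_nonneg s by simp
      have SB: "S s \<le> B" using B(2)[of s] s by auto
      have "c * S s * I s \<ge> c * S s * (- e)"
        using Is S0 c_pos by (intro mult_left_mono) auto
      then have A: "c * S s * I s \<ge> - (c * S s * e)" by simp
      have B': "c * S s * e \<le> c * B * e"
        using SB e c_pos by (intro mult_right_mono mult_left_mono) auto
      have C: "f' s = c * S s * I s + (\<sigma> + \<mu>) * e + e * K"
        by (simp add: f'_def Es e_def)
      have D: "e * K = c * B * e + \<sigma> * e + e" by (simp add: K_def algebra_simps)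
      have F: "(\<sigma> + \<mu>) * e > 0" "\<sigma> * e > 0" using e sig mu by simp_all
      show "0 < f' s" using A B' C D F e by linarith
    next
      fix s assume s: "0 \<le> s" "s \<le> t" "g s = 0" "0 \<le> f s"
      define e where "e = \<epsilon> * exp (K * s)"
      have e: "e > 0" using \<epsilon> by (simp add: e_def)
      have Is: "I s = - e" using s(3) by (simp add: g_def e_def)
      have Es: "E s \<ge> - e" using s(4) by (simp add: f_def e_def)
      have "\<sigma> * E s \<ge> \<sigma> * (- e)" using Es sig by (intro mult_left_mono) auto
      then have A: "\<sigma> * E s \<ge> - (\<sigma> * e)" by simp
      have C: "g' s = \<sigma> * E s + (\<gamma> + \<mu>) * e + e * K"
        by (simp add: g'_def Is e_def)
      have D: "e * K = c * B * e + \<sigma> * e + e" by (simp add: K_def algebra_simps)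
      have F: "(\<gamma> + \<mu>) * e > 0" "c * B * e \<ge> 0" using e gam mu c_pos B by simp_all
      show "0 < g' s" using A C D F e by linarith
    qed
    then show ?thesis using t by (auto simp: f_def g_def)
  qed
  have "E t \<ge> 0"
  proof (rule ccontr)
    assume "\<not> E t \<ge> 0"
    then have "- E t / 2 / exp (K * t) > 0" by (intro divide_pos_pos) auto
    from main[OF this] show False using \<open>\<not> E t \<ge> 0\<close> by simp
  qed
  moreover have "I t \<ge> 0"
  proof (rule ccontr)
    assume "\<not> I t \<ge> 0"
    then have "- I t / 2 / exp (K * t) > 0" by (intro divide_pos_pos) auto
    from main[OF this] show False using \<open>\<not> I t \<ge> 0\<close> by simp
  qed
  ultimately show ?thesis by simp
qed

lemma S_upper:
  assumes t: "t \<ge> 0"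
  shows "S t - Sst \<le> \<bar>S 0 - Sst\<bar> * exp (- k * t)"
proof -
  have "(\<lambda>s. S s - Sst) t \<le> 0 / k + \<bar>(\<lambda>s. S s - Sst) 0\<bar> * exp (- k * (t - 0))"
  proof (rule lin_decay[OF k_pos order_refl order_refl _ _ t])
    fix s :: real assume s: "0 \<le> s"
    show "((\<lambda>s. S s - Sst) has_real_derivative (\<mu> * N - c * S s * I s - k * S s)) (at s within {0..})"
      using DERIV_diff[OF dS[OF s] DERIV_const[of Sst]] by simp
    have "c * S s * I s \<ge> 0" using c_pos S_nonneg[OF s] EI_nonneg[OF s] by simp
    then show "\<mu> * N - c * S s * I s - k * S s \<le> - k * (S s - Sst) + 0"
      using k_Sst by (simp add: algebra_simps)
  qed
  then show ?thesis by simp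
qed

lemma S0_dev: "\<bar>S 0 - Sst\<bar> \<le> N"
  using init' Sst_pos Sst_lt by auto

lemma S_le: "t \<ge> 0 \<Longrightarrow> S t \<le> Sst + N"
  using S_upper[of t] S0_dev k_pos
  by (smt (verit, best) exp_le_one_iff mult_left_le mult_minus_left zero_le_mult_iff)

lemma L_decay:
  assumes r: "r > 0" and \<kappa>: "\<kappa> > 0" and c1: "r * \<sigma> - (\<sigma> + \<mu>) \<le> - \<kappa>"
    and c2: "c * S1 - r * (\<gamma> + \<mu>) \<le> - \<kappa> * r"
    and t0: "t0 \<ge> 0" and SS: "\<And>t. t \<ge> t0 \<Longrightarrow> S t \<le> S1" and t: "t \<ge> t0"
  shows "E t + r * I t \<le> \<bar>E t0 + r * I t0\<bar> * exp (- \<kappa> * (t - t0))"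
proof -
  have "(\<lambda>s. E s + r * I s) t \<le> 0 / \<kappa> + \<bar>(\<lambda>s. E s + r * I s) t0\<bar> * exp (- \<kappa> * (t - t0))"
  proof (rule lin_decay[OF \<kappa> order_refl t0 _ _ t])
    fix s :: real assume s: "t0 \<le> s"
    then have s0: "s \<ge> 0" using t0 by simp
    show "((\<lambda>s. E s + r * I s) has_real_derivative
        ((c * S s * I s - (\<sigma> + \<mu>) * E s) + r * (\<sigma> * E s - (\<gamma> + \<mu>) * I s))) (at s within {0..})"
      by (intro DERIV_add DERIV_cmult dE[OF s0] dI[OF s0])
    have EI: "E s \<ge> 0" "I s \<ge> 0" using EI_nonneg[OF s0] by auto
    have a: "(r * \<sigma> - (\<sigma> + \<mu>)) * E s \<le> - \<kappa> * E s" using c1 EI by (intro mult_right_mono) auto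
    have "(c * S s - r * (\<gamma> + \<mu>)) * I s \<le> (c * S1 - r * (\<gamma> + \<mu>)) * I s"
      using SS[OF s] c_pos EI by (intro mult_right_mono) auto
    also have "\<dots> \<le> (- \<kappa> * r) * I s" using c2 EI by (intro mult_right_mono) auto
    finally have b: "(c * S s - r * (\<gamma> + \<mu>)) * I s \<le> (- \<kappa> * r) * I s" .
    have "(c * S s * I s - (\<sigma> + \<mu>) * E s) + r * (\<sigma> * E s - (\<gamma> + \<mu>) * I s)
        = (r * \<sigma> - (\<sigma> + \<mu>)) * E s + (c * S s - r * (\<gamma> + \<mu>)) * I s"
      by (simp add: algebra_simps)
    also have "\<dots> \<le> - \<kappa> * E s + (- \<kappa> * r) * I s" using a b by simp
    also have "\<dots> = - \<kappa> * (E s + r * I s) + 0" by (simp add: algebra_simps)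
    finally show "(c * S s * I s - (\<sigma> + \<mu>) * E s) + r * (\<sigma> * E s - (\<gamma> + \<mu>) * I s)
        \<le> - \<kappa> * (E s + r * I s) + 0" .
  qed
  then show ?thesis by simp
qed

lemma conv: "(x \<longlongrightarrow> (Sst, 0, 0, 0, Vst)) at_top"
proof -
  obtain r \<kappa> where r: "r > 0" and \<kappa>: "\<kappa> > 0" and c1: "r * \<sigma> - (\<sigma> + \<mu>) \<le> - \<kappa>"
    and c2: "c * S1 - r * (\<gamma> + \<mu>) \<le> - \<kappa> * r" using lyap_consts by blast
  have lim1: "((\<lambda>t. N * exp (- k * t)) \<longlongrightarrow> 0) at_top" using k_pos by real_asymp
  have "eventually (\<lambda>t. N * exp (- k * t) < S1 - Sst) at_top"
    using order_tendstoD(2)[OF lim1] S1_gt by simp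
  then obtain t1 where t1: "\<And>t. t \<ge> t1 \<Longrightarrow> N * exp (- k * t) < S1 - Sst"
    unfolding eventually_at_top_linorder by auto
  define t0 where "t0 = max t1 0"
  have t0: "t0 \<ge> 0" by (simp add: t0_def)
  have SS: "S t \<le> S1" if "t \<ge> t0" for t
  proof -
    have "S t - Sst \<le> \<bar>S 0 - Sst\<bar> * exp (- k * t)" using S_upper that t0 by simp
    also have "\<dots> \<le> N * exp (- k * t)" using S0_dev by (intro mult_right_mono) auto
    also have "\<dots> < S1 - Sst" using t1 that by (simp add: t0_def)
    finally show ?thesis by simp
  qed
  define L0 where "L0 = \<bar>E t0 + r * I t0\<bar>"
  have Ld: "E t + r * I t \<le> L0 * exp (- \<kappa> * (t - t0))" if "t \<ge> t0" for t
    unfolding L0_def by (rule L_decay[OF r \<kappa> c1 c2 t0 SS that])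
  have limL: "((\<lambda>t. L0 * exp (- \<kappa> * (t - t0))) \<longlongrightarrow> 0) at_top" using \<kappa> by real_asymp
  have limL': "((\<lambda>t. L0 * exp (- \<kappa> * (t - t0)) / r) \<longlongrightarrow> 0) at_top"
    using tendsto_divide[OF limL tendsto_const[of r]] r by simp
  have evt: "eventually (\<lambda>t. t \<ge> t0) at_top" by simp
  have limE: "(E \<longlongrightarrow> 0) at_top"
  proof (rule tendsto_sandwich[OF _ _ tendsto_const limL])
    show "eventually (\<lambda>t. 0 \<le> E t) at_top" using evt
      by eventually_elim (use t0 EI_nonneg in auto)
    show "eventually (\<lambda>t. E t \<le> L0 * exp (- \<kappa> * (t - t0))) at_top" using evt
    proof eventually_elim
      case (elim t) then show ?case using Ld[OF elim] EI_nonneg[of t] t0 r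
        by (smt (verit) mult_nonneg_nonneg)
    qed
  qed
  have limI: "(I \<longlongrightarrow> 0) at_top"
  proof (rule tendsto_sandwich[OF _ _ tendsto_const limL'])
    show "eventually (\<lambda>t. 0 \<le> I t) at_top" using evt
      by eventually_elim (use t0 EI_nonneg in auto)
    show "eventually (\<lambda>t. I t \<le> L0 * exp (- \<kappa> * (t - t0)) / r) at_top" using evt
    proof eventually_elim
      case (elim t)
      have "r * I t \<le> L0 * exp (- \<kappa> * (t - t0))" using Ld[OF elim] EI_nonneg[of t] t0 elim by linarith
      then show ?case using r by (simp add: pos_le_divide_eq mult.commute)
    qed
  qed
  have ev0: "eventually (\<lambda>t::real. t \<ge> 0) at_top" by (rule eventually_ge_at_top)
  have limS: "(S \<longlongrightarrow> Sst) at_top"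
  proof -
    have "((\<lambda>t. S t - Sst) \<longlongrightarrow> 0) at_top"
    proof (rule lin_conv[OF k_pos])
      fix t :: real assume t: "t \<ge> 0"
      show "((\<lambda>t. S t - Sst) has_real_derivative - k * (S t - Sst) + - (c * S t * I t)) (at t within {0..})"
        using DERIV_diff[OF dS[OF t] DERIV_const[of Sst]] k_Sst by (simp add: algebra_simps)
    next
      show "((\<lambda>t. - (c * S t * I t)) \<longlongrightarrow> 0) at_top"
      proof (rule tendsto_0_le[OF limI, of _ "c * (Sst + N)"])
        show "eventually (\<lambda>t. norm (- (c * S t * I t)) \<le> norm (I t) * (c * (Sst + N))) at_top"
          using ev0
        proof eventually_elim
          case (elim t)
          have "norm (- (c * S t * I t)) = c * S t * \<bar>I t\<bar>" using c_pos S_nonneg[OF elim]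
            by (simp add: abs_mult)
          also have "\<dots> \<le> c * (Sst + N) * \<bar>I t\<bar>"
            using S_le[OF elim] c_pos by (intro mult_right_mono mult_left_mono) auto
          finally show ?case by (simp add: mult.commute)
        qed
      qed
    qed
    then show ?thesis by (simp add: LIM_zero_iff)
  qed
  have limR: "(R \<longlongrightarrow> 0) at_top"
  proof (rule lin_conv[OF mu])
    fix t :: real assume t: "t \<ge> 0"
    show "(R has_real_derivative - \<mu> * R t + \<gamma> * I t) (at t within {0..})"
      using dR[OF t] by simp
  next
    show "((\<lambda>t. \<gamma> * I t) \<longlongrightarrow> 0) at_top" using tendsto_mult_right_zero[OF limI] by simp
  qed
  have limV: "(V \<longlongrightarrow> Vst) at_top"
  proof -
    have "((\<lambda>t. V t - Vst) \<longlongrightarrow> 0) at_top"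
    proof (rule lin_conv[OF mu])
      fix t :: real assume t: "t \<ge> 0"
      show "((\<lambda>t. V t - Vst) has_real_derivative - \<mu> * (V t - Vst) + p / N * (S t - Sst)) (at t within {0..})"
        using DERIV_diff[OF dV[OF t] DERIV_const[of Vst]] Vst_eq by (simp add: algebra_simps)
    next
      have "((\<lambda>t. S t - Sst) \<longlongrightarrow> 0) at_top" using limS by (simp add: LIM_zero_iff)
      then show "((\<lambda>t. p / N * (S t - Sst)) \<longlongrightarrow> 0) at_top"
        using tendsto_mult_right_zero by blast
    qed
    then show ?thesis by (simp add: LIM_zero_iff)
  qed
  have "((\<lambda>t. (S t, E t, I t, R t, V t)) \<longlongrightarrow> (Sst, 0, 0, 0, Vst)) at_top"
    by (intro tendsto_Pair limS limE limI limR limV)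
  moreover have "(\<lambda>t. (S t, E t, I t, R t, V t)) = x" using x_eq by auto
  ultimately show ?thesis by simp
qed

lemma stab:
  assumes r: "r > 0" and \<kappa>: "\<kappa> > 0" and c1: "r * \<sigma> - (\<sigma> + \<mu>) \<le> - \<kappa>"
    and c2: "c * S1 - r * (\<gamma> + \<mu>) \<le> - \<kappa> * r"
    and \<delta>: "\<delta> > 0" "\<delta> \<le> S1 - Sst" and d0: "dist (x 0) (Sst, 0, 0, 0, Vst) < \<delta>" and t: "t \<ge> 0"
  shows "dist (x t) (Sst, 0, 0, 0, Vst) \<le> \<delta> * Cc r"
proof -
  define P where "P = (Sst, 0::real, 0::real, 0::real, Vst)"
  have d0': "dist (x 0) P < \<delta>" using d0 by (simp add: P_def)
  have a1: "dist (fst (x 0)) (fst P) \<le> dist (x 0) P" by (rule dist_fst_le)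
  have a2: "dist (snd (x 0)) (snd P) \<le> dist (x 0) P" by (rule dist_snd_le)
  have a3: "dist (fst (snd (x 0))) (fst (snd P)) \<le> dist (snd (x 0)) (snd P)" by (rule dist_fst_le)
  have a4: "dist (snd (snd (x 0))) (snd (snd P)) \<le> dist (snd (x 0)) (snd P)" by (rule dist_snd_le)
  have a5: "dist (fst (snd (snd (x 0)))) (fst (snd (snd P))) \<le> dist (snd (snd (x 0))) (snd (snd P))" by (rule dist_fst_le)
  have a6: "dist (snd (snd (snd (x 0)))) (snd (snd (snd P))) \<le> dist (snd (snd (x 0))) (snd (snd P))" by (rule dist_snd_le)
  have a7: "dist (fst (snd (snd (snd (x 0))))) (fst (snd (snd (snd P)))) \<le> dist (snd (snd (snd (x 0)))) (snd (snd (snd P)))" by (rule dist_fst_le)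
  have a8: "dist (snd (snd (snd (snd (x 0))))) (snd (snd (snd (snd P)))) \<le> dist (snd (snd (snd (x 0)))) (snd (snd (snd P)))" by (rule dist_snd_le)
  have S0: "\<bar>S 0 - Sst\<bar> < \<delta>" using a1 d0' by (simp add: P_def S_def dist_real_def)
  have E0: "E 0 < \<delta>" using a2 a3 d0' init' by (simp add: P_def E_def dist_real_def)
  have I0: "I 0 < \<delta>" using a2 a4 a5 d0' init' by (simp add: P_def I_def dist_real_def)
  have R0: "\<bar>R 0\<bar> < \<delta>" using a2 a4 a6 a7 d0' by (simp add: P_def R_def dist_real_def)
  have V0: "\<bar>V 0 - Vst\<bar> < \<delta>" using a2 a4 a6 a8 d0' by (simp add: P_def V_def dist_real_def)
  have SS: "S s \<le> S1" if s: "s \<ge> 0" for s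
  proof -
    have "S s - Sst \<le> \<bar>S 0 - Sst\<bar> * exp (- k * s)" by (rule S_upper[OF s])
    also have "\<dots> \<le> \<bar>S 0 - Sst\<bar> * 1" using k_pos s by (intro mult_left_mono) auto
    finally show ?thesis using S0 \<delta> by simp
  qed
  define Im where "Im = (1 + r) * \<delta> / r"
  have EI: "E s \<le> (1 + r) * \<delta> \<and> I s \<le> Im" if s: "s \<ge> 0" for s
  proof -
    have "E s + r * I s \<le> \<bar>E 0 + r * I 0\<bar> * exp (- \<kappa> * (s - 0))"
      by (rule L_decay[OF r \<kappa> c1 c2 order_refl SS s]) auto
    also have "\<dots> \<le> \<bar>E 0 + r * I 0\<bar> * 1" using \<kappa> s by (intro mult_left_mono) auto
    also have "\<dots> = E 0 + r * I 0" using init' r by simp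
    also have "\<dots> \<le> (1 + r) * \<delta>"
    proof -
      have "r * I 0 \<le> r * \<delta>" using I0 r by (intro mult_left_mono) auto
      then show ?thesis using E0 by (simp add: algebra_simps)
    qed
    finally have L: "E s + r * I s \<le> (1 + r) * \<delta>" .
    have nn: "E s \<ge> 0" "I s \<ge> 0" using EI_nonneg[OF s] by auto
    have "E s \<le> (1 + r) * \<delta>" using L nn r by (smt (verit) mult_nonneg_nonneg)
    moreover have "r * I s \<le> (1 + r) * \<delta>" using L nn by linarith
    then have "I s \<le> Im" using r by (simp add: Im_def pos_le_divide_eq mult.commute)
    ultimately show ?thesis by simp
  qed
  define DS where "DS = c * S1 * Im / k + \<delta>"
  have Sdev: "\<bar>S s - Sst\<bar> \<le> DS" if s: "s \<ge> 0" for s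
  proof -
    have "\<bar>(\<lambda>s. S s - Sst) s\<bar> \<le> (c * S1 * Im) / k + \<bar>(\<lambda>s. S s - Sst) 0\<bar> * exp (- k * (s - 0))"
    proof (rule lin_decay2[OF k_pos order_refl _ _ s])
      fix u :: real assume u: "0 \<le> u"
      show "((\<lambda>t. S t - Sst) has_real_derivative - k * (S u - Sst) + - (c * S u * I u)) (at u within {0..})"
        using DERIV_diff[OF dS[OF u] DERIV_const[of Sst]] k_Sst by (simp add: algebra_simps)
      have "c * S u * I u \<le> c * S1 * Im"
        using SS[OF u] EI[OF u] S_nonneg[OF u] EI_nonneg[OF u] c_pos
        by (intro mult_mono mult_left_mono) auto
      then show "\<bar>- (c * S u * I u)\<bar> \<le> c * S1 * Im"
        using S_nonneg[OF u] EI_nonneg[OF u] c_pos by simp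
    qed
    also have "\<bar>(\<lambda>s. S s - Sst) 0\<bar> * exp (- k * (s - 0)) \<le> \<bar>S 0 - Sst\<bar> * 1"
      using k_pos s by (intro mult_left_mono) auto
    finally show ?thesis using S0 by (simp add: DS_def)
  qed
  have Rdev: "\<bar>R t\<bar> \<le> \<gamma> * Im / \<mu> + \<delta>"
  proof -
    have "\<bar>R t\<bar> \<le> (\<gamma> * Im) / \<mu> + \<bar>R 0\<bar> * exp (- \<mu> * (t - 0))"
    proof (rule lin_decay2[OF mu order_refl _ _ t])
      fix u :: real assume u: "0 \<le> u"
      show "(R has_real_derivative - \<mu> * R u + \<gamma> * I u) (at u within {0..})" using dR[OF u] by simp
      show "\<bar>\<gamma> * I u\<bar> \<le> \<gamma> * Im" using EI[OF u] EI_nonneg[OF u] gam by simp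
    qed
    also have "\<bar>R 0\<bar> * exp (- \<mu> * (t - 0)) \<le> \<bar>R 0\<bar> * 1"
      using mu t by (intro mult_left_mono) auto
    finally show ?thesis using R0 by simp
  qed
  have Vdev: "\<bar>V t - Vst\<bar> \<le> p / N * DS / \<mu> + \<delta>"
  proof -
    have "\<bar>(\<lambda>s. V s - Vst) t\<bar> \<le> (p / N * DS) / \<mu> + \<bar>(\<lambda>s. V s - Vst) 0\<bar> * exp (- \<mu> * (t - 0))"
    proof (rule lin_decay2[OF mu order_refl _ _ t])
      fix u :: real assume u: "0 \<le> u"
      show "((\<lambda>t. V t - Vst) has_real_derivative - \<mu> * (V u - Vst) + p / N * (S u - Sst)) (at u within {0..})"
        using DERIV_diff[OF dV[OF u] DERIV_const[of Vst]] Vst_eq by (simp add: algebra_simps)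
      have "p / N \<ge> 0" using pp N by simp
      then have "\<bar>p / N\<bar> * \<bar>S u - Sst\<bar> \<le> p / N * DS"
        using Sdev[OF u] by (metis abs_of_nonneg mult_left_mono)
      then show "\<bar>p / N * (S u - Sst)\<bar> \<le> p / N * DS" by (simp only: abs_mult)
    qed
    also have "\<bar>(\<lambda>s. V s - Vst) 0\<bar> * exp (- \<mu> * (t - 0)) \<le> \<bar>V 0 - Vst\<bar> * 1"
      using mu t by (intro mult_left_mono) auto
    finally show ?thesis using V0 by simp
  qed
  have "dist (x t) P \<le> dist (S t) Sst + (dist (E t) 0 + (dist (I t) 0 + (dist (R t) 0 + dist (V t) Vst)))"
  proof -
    have 1: "dist (V t) Vst = dist (V t) Vst" ..
    have 2: "dist (R t, V t) (0, Vst) \<le> dist (R t) 0 + dist (V t) Vst" by (rule dist_Pair_le)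
    have 3: "dist (I t, R t, V t) (0, 0, Vst) \<le> dist (I t) 0 + dist (R t, V t) (0, Vst)" by (rule dist_Pair_le)
    have 4: "dist (E t, I t, R t, V t) (0, 0, 0, Vst) \<le> dist (E t) 0 + dist (I t, R t, V t) (0, 0, Vst)" by (rule dist_Pair_le)
    have 5: "dist (S t, E t, I t, R t, V t) (Sst, 0, 0, 0, Vst) \<le> dist (S t) Sst + dist (E t, I t, R t, V t) (0, 0, 0, Vst)" by (rule dist_Pair_le)
    have "dist (x t) P = dist (S t, E t, I t, R t, V t) (Sst, 0, 0, 0, Vst)" by (simp only: x_eq P_def)
    then show ?thesis using 2 3 4 5 by linarith
  qed
  also have "\<dots> \<le> DS + ((1 + r) * \<delta> + (Im + ((\<gamma> * Im / \<mu> + \<delta>) + (p / N * DS / \<mu> + \<delta>))))"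
    using Sdev[OF t] EI[OF t] EI_nonneg[OF t] Rdev Vdev by (simp add: dist_real_def)
  also have "\<dots> = \<delta> * Cc r"
  proof -
    have rk: "r \<noteq> 0" "k \<noteq> 0" "N \<noteq> 0" "\<mu> \<noteq> 0" using r k_pos N mu by auto
    have i1: "c * S1 * Im / k = \<delta> * (c * S1 * (1 + r) / (r * k))" unfolding Im_def using rk by (simp add: field_simps)
    have DSe: "DS = \<delta> * DSc r" using i1 by (simp add: DS_def DSc_def algebra_simps)
    have i2: "p / N * DS / \<mu> = DS * (p / (N * \<mu>))" using rk by (simp add: field_simps)
    have i3: "Im + \<gamma> * Im / \<mu> = Im * (1 + \<gamma> / \<mu>)" using rk by (simp add: field_simps)
    have i4: "Im = \<delta> * ((1 + r) / r)" by (simp add: Im_def)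
    have "DS + ((1 + r) * \<delta> + (Im + ((\<gamma> * Im / \<mu> + \<delta>) + (p / N * DS / \<mu> + \<delta>))))
        = DS * (1 + p / (N * \<mu>)) + (1 + r) * \<delta> + Im * (1 + \<gamma> / \<mu>) + 2 * \<delta>"
      using i2 i3 by (simp add: algebra_simps)
    also have "\<dots> = \<delta> * Cc r" unfolding DSe i4 Cc_def using rk by (simp add: algebra_simps add_divide_distrib)
    finally show ?thesis .
  qed
  finally show ?thesis by (simp add: P_def)
qed

end

context seir_params
begin

lemma gas: "globally_asymptotically_stable_in (seir_field N \<mu> \<beta> \<sigma> \<gamma> p \<rho>) (Sst, 0, 0, 0, Vst) (Sigma_region N)"
  unfolding globally_asymptotically_stable_in_def
proof (intro conjI allI impI)
  fix \<epsilon> :: real assume \<epsilon>: "\<epsilon> > 0"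
  obtain r \<kappa> where r: "r > 0" and \<kappa>: "\<kappa> > 0" and c1: "r * \<sigma> - (\<sigma> + \<mu>) \<le> - \<kappa>"
    and c2: "c * S1 - r * (\<gamma> + \<mu>) \<le> - \<kappa> * r" using lyap_consts by blast
  define \<delta> where "\<delta> = min (S1 - Sst) (\<epsilon> / (\<bar>Cc r\<bar> + 1))"
  have \<delta>: "\<delta> > 0" "\<delta> \<le> S1 - Sst" using S1_gt \<epsilon> by (auto simp: \<delta>_def)
  have \<delta>2: "\<delta> * (\<bar>Cc r\<bar> + 1) \<le> \<epsilon>"
    using \<epsilon> unfolding \<delta>_def by (simp add: pos_le_divide_eq[symmetric])
  have \<delta>3: "\<delta> * Cc r < \<epsilon>"
  proof -
    have "\<delta> * Cc r \<le> \<delta> * \<bar>Cc r\<bar>" using \<delta> by (intro mult_left_mono) auto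
    also have "\<dots> < \<delta> * (\<bar>Cc r\<bar> + 1)" using \<delta> by simp
    finally show ?thesis using \<delta>2 by simp
  qed
  show "\<exists>\<delta>>0. \<forall>x. is_solution (seir_field N \<mu> \<beta> \<sigma> \<gamma> p \<rho>) x \<and> x 0 \<in> Sigma_region N \<and>
      dist (x 0) (Sst, 0, 0, 0, Vst) < \<delta> \<longrightarrow> (\<forall>t\<ge>0. dist (x t) (Sst, 0, 0, 0, Vst) < \<epsilon>)"
  proof (intro exI[of _ \<delta>] conjI allI impI)
    show "\<delta> > 0" by (rule \<delta>(1))
    fix x t assume h: "is_solution (seir_field N \<mu> \<beta> \<sigma> \<gamma> p \<rho>) x \<and> x 0 \<in> Sigma_region N \<and>
      dist (x 0) (Sst, 0, 0, 0, Vst) < \<delta>" and t: "(0::real) \<le> t"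
    interpret X: seir_sol N \<mu> \<beta> \<sigma> \<gamma> p \<rho> x
      using seir_params_axioms h by (simp add: seir_sol_def seir_sol_axioms_def)
    have "dist (x t) (Sst, 0, 0, 0, Vst) \<le> \<delta> * Cc r"
      by (rule X.stab[OF r \<kappa> c1 c2 \<delta>]) (use h t in auto)
    then show "dist (x t) (Sst, 0, 0, 0, Vst) < \<epsilon>" using \<delta>3 by simp
  qed
next
  fix x assume h: "is_solution (seir_field N \<mu> \<beta> \<sigma> \<gamma> p \<rho>) x \<and> x 0 \<in> Sigma_region N"
  interpret X: seir_sol N \<mu> \<beta> \<sigma> \<gamma> p \<rho> x
    using seir_params_axioms h by (simp add: seir_sol_def seir_sol_axioms_def)
  show "(x \<longlongrightarrow> (Sst, 0, 0, 0, Vst)) at_top" by (rule X.conv)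
qed

end

theorem mainTheorem7:
  fixes N \<mu> \<beta> \<sigma> \<gamma> p \<rho> :: real
  assumes "N > 0" "\<mu> > 0" "\<beta> > 0" "\<sigma> > 0" "\<gamma> > 0" "p > 0"
    and "0 < \<rho>" "\<rho> < 1"
    and "\<mu> * N * \<sigma> * \<beta> * (1 - \<rho>) / ((\<sigma> + \<mu>) * (\<gamma> + \<mu>) * (p + \<mu> * N)) < 1"
  shows "globally_asymptotically_stable_in (seir_field N \<mu> \<beta> \<sigma> \<gamma> p \<rho>)
           (\<mu> * N^2 / (p + \<mu> * N), 0, 0, 0, p * N / (p + \<mu> * N)) (Sigma_region N)"
proof -
  interpret P: seir_params N \<mu> \<beta> \<sigma> \<gamma> p \<rho> using assms by unfold_locales
  show ?thesis using P.gas by (simp add: P.Sst_def P.Vst_def)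
qed

end
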